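(* Let $P,N>0$. If $\mathcal{C}$ is a $(P,N,1)$-sphere packing, then it is also a $(P,N',L)$-average-radius multiple packing for any $0\le N'<\frac{2(L-1)N}{L}$ and any $L\in\mathbb{Z}_{\ge2}$.
   Context: $\mathcal{B}^n(y,r)$ is the closed Euclidean ball in $\mathbb{R}^n$ of radius $r$ centered at $y$, $\mathcal{B}^n(r)=\mathcal{B}^n(0,r)$. A set $\mathcal{C}\subseteq\mathcal{B}^n(\sqrt{nP})$ is a $(P,N,1)$-sphere packing if $|\mathcal{C}\cap\mathcal{B}^n(y,\sqrt{nN})|\le1$ for every $y\in\mathbb{R}^n$. For $x_1,\dots,x_m\in\mathbb{R}^n$ with centroid $\bar x$, $\overline{\mathrm{rad}}^2(x_1,\dots,x_m)=\frac1m\sum_i\|x_i-\bar x\|_2^2$. A set $\mathcal{C}\subseteq\mathcal{B}^n(\sqrt{nP})$ is a $(P,N',K)$-average-radius multiple packing if every $K+1$ distinct points of $\mathcal{C}$ have average squared radius strictly greater than $nN'$. *)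

theory Defs
  imports "HOL-Analysis.Analysis"
begin

text \<open>Points live in an abstract Euclidean space 'a of dimension n = DIM('a).
  Closed ball B^n(y,r) is cball y r.\<close>

definition sphere_packing :: "real \<Rightarrow> real \<Rightarrow> 'a::euclidean_space set \<Rightarrow> bool" where
  "sphere_packing P N C \<longleftrightarrow>
     C \<subseteq> cball 0 (sqrt (real DIM('a) * P)) \<and>
     (\<forall>y. \<forall>x\<in>C \<inter> cball y (sqrt (real DIM('a) * N)).
            \<forall>z\<in>C \<inter> cball y (sqrt (real DIM('a) * N)). x = z)"

definition centroid :: "'a::euclidean_space set \<Rightarrow> 'a" where
  "centroid S = (1 / real (card S)) *\<^sub>R (\<Sum>x\<in>S. x)"

definition avg_rad2 :: "'a::euclidean_space set \<Rightarrow> real" where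
  "avg_rad2 S = (1 / real (card S)) * (\<Sum>x\<in>S. (norm (x - centroid S))\<^sup>2)"

definition avg_radius_multiple_packing :: "real \<Rightarrow> real \<Rightarrow> nat \<Rightarrow> 'a::euclidean_space set \<Rightarrow> bool" where
  "avg_radius_multiple_packing P N' K C \<longleftrightarrow>
     C \<subseteq> cball 0 (sqrt (real DIM('a) * P)) \<and>
     (\<forall>S. S \<subseteq> C \<and> finite S \<and> card S = K + 1 \<longrightarrow> avg_rad2 S > real DIM('a) * N')"

end

theory Submission
  imports Defs
begin

lemma pair_sum_identity:
  fixes S :: "'a::euclidean_space set"
  assumes "finite S" "S \<noteq> {}"
  shows "(\<Sum>x\<in>S. \<Sum>z\<in>S. (norm (x - z))\<^sup>2) = 2 * real (card S) * (\<Sum>x\<in>S. (norm (x - centroid S))\<^sup>2)"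
proof -
  define m where "m = real (card S)"
  define s where "s = (\<Sum>x\<in>S. x)"
  have m0: "m > 0" using assms by (simp add: m_def card_gt_0_iff)
  have c: "centroid S = (1/m) *\<^sub>R s" by (simp add: centroid_def m_def s_def)
  have "(\<Sum>x\<in>S. \<Sum>z\<in>S. (norm (x - z))\<^sup>2) = (\<Sum>x\<in>S. \<Sum>z\<in>S. (x \<bullet> x + z \<bullet> z - 2 * (x \<bullet> z)))"
    by (intro sum.cong refl) (simp add: power2_norm_eq_inner inner_diff_left inner_diff_right inner_commute)
  also have "\<dots> = (\<Sum>x\<in>S. m * (x \<bullet> x) + (\<Sum>z\<in>S. z \<bullet> z) - 2 * (x \<bullet> s))"
    by (simp add: sum_subtractf sum.distrib m_def s_def inner_sum_right sum_distrib_left)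
  also have "\<dots> = m * (\<Sum>x\<in>S. x \<bullet> x) + m * (\<Sum>z\<in>S. z \<bullet> z) - 2 * (s \<bullet> s)"
    by (simp add: sum_subtractf sum.distrib sum_distrib_left inner_sum_left m_def s_def)
  also have "\<dots> = 2 * m * (\<Sum>x\<in>S. x \<bullet> x) - 2 * (s \<bullet> s)" by simp
  finally have A: "(\<Sum>x\<in>S. \<Sum>z\<in>S. (norm (x - z))\<^sup>2) = 2 * m * (\<Sum>x\<in>S. x \<bullet> x) - 2 * (s \<bullet> s)" .
  have "(\<Sum>x\<in>S. (norm (x - centroid S))\<^sup>2) = (\<Sum>x\<in>S. x \<bullet> x - (2/m) * (x \<bullet> s) + (s \<bullet> s)/ m^2)"
    by (intro sum.cong refl) (simp only: c power2_norm_eq_inner, simp add: inner_diff_left inner_diff_right inner_commute power2_eq_square field_simps)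
  also have "\<dots> = (\<Sum>x\<in>S. x \<bullet> x) - (2/m) * (s \<bullet> s) + m * (s \<bullet> s) / m^2"
    by (simp add: sum_subtractf sum.distrib sum_distrib_left[symmetric] sum_divide_distrib[symmetric] inner_sum_left s_def m_def)
  also have "\<dots> = (\<Sum>x\<in>S. x \<bullet> x) - (s \<bullet> s) / m"
    using m0 by (simp add: field_simps power2_eq_square)
  finally have B: "(\<Sum>x\<in>S. (norm (x - centroid S))\<^sup>2) = (\<Sum>x\<in>S. x \<bullet> x) - (s \<bullet> s) / m" .
  show ?thesis unfolding A B m_def[symmetric] using m0 by (simp add: field_simps)
qed

lemma sep:
  fixes C :: "'a::euclidean_space set"
  assumes "sphere_packing P N C" "x \<in> C" "z \<in> C" "x \<noteq> z" "N > 0"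
  shows "(norm (x - z))\<^sup>2 > 4 * (real DIM('a) * N)"
proof -
  define r where "r = sqrt (real DIM('a) * N)"
  have r0: "r \<ge> 0" unfolding r_def using assms(5) by simp
  have "norm (x - z) > 2 * r"
  proof (rule ccontr)
    assume h: "\<not> norm (x - z) > 2 * r"
    define y where "y = (1/2) *\<^sub>R (x + z)"
    have e1: "y - x = (1/2) *\<^sub>R (z - x)" by (simp add: y_def algebra_simps scaleR_half_double[symmetric] scaleR_add_left[symmetric])
    have e2: "y - z = (1/2) *\<^sub>R (x - z)" by (simp add: y_def algebra_simps scaleR_half_double[symmetric] scaleR_add_left[symmetric])
    have "dist y x = norm (x - z) / 2"
      by (simp only: dist_norm e1 norm_scaleR norm_minus_commute[of z x]; simp?)
    moreover have "dist y z = norm (x - z) / 2"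
      by (simp only: dist_norm e2 norm_scaleR; simp?)
    ultimately have "x \<in> cball y r" "z \<in> cball y r" using h by (auto simp: dist_commute)
    then show False using assms(1-4) unfolding sphere_packing_def r_def by blast
  qed
  then have "(2*r)^2 < (norm (x - z))^2" using r0 by (intro power_strict_mono) auto
  moreover have "(2*r)^2 = 4 * (real DIM('a) * N)" unfolding r_def using assms(5) by (simp add: power_mult_distrib)
  ultimately show ?thesis by simp
qed

theorem mainTheorem10:
  fixes C :: "'a::euclidean_space set" and P N N' :: real and L :: nat
  assumes "P > 0" and "N > 0"
    and "sphere_packing P N C"
    and "L \<ge> 2"
    and "0 \<le> N'" and "N' < 2 * (real L - 1) * N / real L"
  shows "avg_radius_multiple_packing P N' L C"
  unfolding avg_radius_multiple_packing_def
proof (intro conjI allI impI)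
  show "C \<subseteq> cball 0 (sqrt (real DIM('a) * P))" using assms(3) unfolding sphere_packing_def by blast
next
  fix S assume S: "S \<subseteq> C \<and> finite S \<and> card S = L + 1"
  define r where "r = real DIM('a) * N"
  define m where "m = real (card S)"
  have fin: "finite S" using S by blast
  have ne: "S \<noteq> {}" using S by auto
  have mL: "m = real L + 1" using S by (simp add: m_def)
  have r0: "r > 0" unfolding r_def using assms(2) by simp
  have inner: "(\<Sum>z\<in>S. (norm (x - z))\<^sup>2) > (m - 1) * (4 * r)" if x: "x \<in> S" for x
  proof -
    have "(\<Sum>z\<in>S. (norm (x - z))\<^sup>2) = (\<Sum>z\<in>S - {x}. (norm (x - z))\<^sup>2)"
      using fin x by (simp add: sum.remove)
    also have "\<dots> > (\<Sum>z\<in>S - {x}. 4 * r)"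
    proof (rule sum_strict_mono)
      show "finite (S - {x})" using fin by simp
      have "card (S - {x}) \<ge> 1" using S x assms(4) by simp
      then show "S - {x} \<noteq> {}" by (metis card.empty not_one_le_zero)
      fix z assume "z \<in> S - {x}"
      then show "4 * r < (norm (x - z))\<^sup>2" using sep[OF assms(3), of x z] S x assms(2) r_def by auto
    qed
    also have "(\<Sum>z\<in>S - {x}. 4 * r) = (m - 1) * (4 * r)"
    proof -
      have "card S \<ge> 1" using fin x by (metis One_nat_def Suc_leI card_gt_0_iff empty_iff)
      then show ?thesis using fin x by (simp add: m_def card_Diff_singleton of_nat_diff)
    qed
    finally show ?thesis by simp
  qed
  have "(\<Sum>x\<in>S. \<Sum>z\<in>S. (norm (x - z))\<^sup>2) > (\<Sum>x\<in>S. (m - 1) * (4 * r))"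
    using fin ne inner by (intro sum_strict_mono) auto
  then have T: "2 * m * (\<Sum>x\<in>S. (norm (x - centroid S))\<^sup>2) > m * ((m - 1) * (4 * r))"
    using pair_sum_identity[OF fin ne] by (simp add: m_def)
  have m0: "m > 0" using mL by simp
  have av: "avg_rad2 S = (\<Sum>x\<in>S. (norm (x - centroid S))\<^sup>2) / m"
    by (simp add: avg_rad2_def m_def)
  have "avg_rad2 S > 2 * (m - 1) * r / m"
    unfolding av using T m0 by (simp add: field_simps)
  moreover have "real DIM('a) * N' \<le> 2 * (m - 1) * r / m"
  proof -
    have L0: "real L > 0" using assms(4) by simp
    have "N' \<le> 2 * (real L - 1) * N / real L" using assms(6) by simp
    also have "\<dots> \<le> 2 * real L * N / (real L + 1)"
      using L0 assms(2) by (simp add: field_simps)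
    finally have "N' \<le> 2 * real L * N / (real L + 1)" .
    then have "real DIM('a) * N' \<le> real DIM('a) * (2 * real L * N / (real L + 1))"
      by (intro mult_left_mono) auto
    also have "\<dots> = 2 * (m - 1) * r / m" unfolding mL r_def by simp
    finally show ?thesis .
  qed
  ultimately show "avg_rad2 S > real DIM('a) * N'" by linarith
qed

end
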